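(* In the setting below, fix a node $i\in\{1,\dots,m\}$ and $0<\epsilon<1$. Repeat $h$ times independently: prepare $|0_{G_i}\rangle|0_G\rangle$, apply $\mathrm{QFT}_{G_i}\otimes\mathrm{I}_G$, then $U_{f_i}$, then $\mathrm{QFT}_{G_i}^\dagger\otimes\mathrm{I}_G$, and measure the first register obtaining $\mathbf{m}_j\in G_i$. Let $M_h=\{\mathbf{m}_1,\dots,\mathbf{m}_h\}$ and $A_i=\{x\in G_i:\langle \mathbf{m}_j,x\rangle_i=0\ \forall j\}=(\mathrm{span}(M_h))^\perp$. Then $\Pr(A_i=K_i)\ge 1-\epsilon/m$ provided \[h\ge\mathrm{rank}(G_i)+\left\lceil\log_2\tfrac{2m}{\epsilon}\right\rceil\quad\text{or}\quad h\ge\mathrm{len}(G_i)-\mathrm{len}(K_i)+\left\lceil\log_2\tfrac{m}{\epsilon}\right\rceil.\]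
   Context: Setting: $p_1,\dots,p_m$ distinct primes, $G=G_1\oplus\cdots\oplus G_m$, $G_i=\bigoplus_{j=1}^{r_i}\mathbb{Z}_{p_i^{\alpha_{ij}}}$ ($\alpha_{ij}\ge1$); $f:G\to G$ with $f(x)=f(y)\iff x-y\in K$, $K\le G$; $K=K_1\oplus\cdots\oplus K_m$ with $K_i\le G_i$; $f_i(g_i)=f(0_1,\dots,g_i,\dots,0_m)$. $\langle x,y\rangle_i=\sum_j x_{ij}y_{ij}/p_i^{\alpha_{ij}}\pmod1$ on $G_i$; $H^\perp=\{g\in G_i:\langle h,g\rangle_i=0\ \forall h\in H\}$ for $H\le G_i$; $\mathrm{span}$ = generated subgroup. $\mathrm{rank}$ = minimal number of generators; $\mathrm{len}$ = composition length (for $|H|=p^e$, $\mathrm{len}(H)=e$). $\mathcal{H}_{G_i}$, $\mathcal{H}_G$ have computational bases indexed by $G_i$, $G$; $\mathrm{QFT}_{G_i}=\bigotimes_j\mathrm{QFT}_{p_i^{\alpha_{ij}}}$ with $\mathrm{QFT}_N|x\rangle=\frac1{\sqrt N}\sum_y e^{2\pi ixy/N}|y\rangle$; $U_{f_i}|g\rangle|b\rangle=|g\rangle|b+f_i(g)\rangle$. *)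

theory Defs
  imports "HOL-Computational_Algebra.Primes" Complex_Main
begin

(* Elements of G_i = (+)_{j<r i} Z_{p_i^{alpha i j}} : functions nat => int, supported on j < r i.
   Elements of G = (+)_{k<m} G_k : functions nat => nat => int, supported on k < m, j < r k.
   Nodes are indexed 0..m-1. *)

definition Gi :: "(nat \<Rightarrow> nat) \<Rightarrow> (nat \<Rightarrow> nat) \<Rightarrow> (nat \<Rightarrow> nat \<Rightarrow> nat) \<Rightarrow> nat \<Rightarrow> (nat \<Rightarrow> int) set" where
  "Gi p r \<alpha> i = {x. (\<forall>j<r i. 0 \<le> x j \<and> x j < int (p i ^ \<alpha> i j)) \<and> (\<forall>j\<ge>r i. x j = 0)}"

definition Gfull :: "(nat \<Rightarrow> nat) \<Rightarrow> (nat \<Rightarrow> nat) \<Rightarrow> (nat \<Rightarrow> nat \<Rightarrow> nat) \<Rightarrow> nat \<Rightarrow> (nat \<Rightarrow> nat \<Rightarrow> int) set" where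
  "Gfull p r \<alpha> m = {x. \<forall>k j. if k < m \<and> j < r k then 0 \<le> x k j \<and> x k j < int (p k ^ \<alpha> k j) else x k j = 0}"

definition gi_add :: "(nat \<Rightarrow> nat) \<Rightarrow> (nat \<Rightarrow> nat \<Rightarrow> nat) \<Rightarrow> nat \<Rightarrow> (nat \<Rightarrow> int) \<Rightarrow> (nat \<Rightarrow> int) \<Rightarrow> (nat \<Rightarrow> int)" where
  "gi_add p \<alpha> i x y = (\<lambda>j. (x j + y j) mod int (p i ^ \<alpha> i j))"

definition gi_neg :: "(nat \<Rightarrow> nat) \<Rightarrow> (nat \<Rightarrow> nat \<Rightarrow> nat) \<Rightarrow> nat \<Rightarrow> (nat \<Rightarrow> int) \<Rightarrow> (nat \<Rightarrow> int)" where
  "gi_neg p \<alpha> i x = (\<lambda>j. (- x j) mod int (p i ^ \<alpha> i j))"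

definition g_add :: "(nat \<Rightarrow> nat) \<Rightarrow> (nat \<Rightarrow> nat \<Rightarrow> nat) \<Rightarrow> (nat \<Rightarrow> nat \<Rightarrow> int) \<Rightarrow> (nat \<Rightarrow> nat \<Rightarrow> int) \<Rightarrow> (nat \<Rightarrow> nat \<Rightarrow> int)" where
  "g_add p \<alpha> x y = (\<lambda>k j. (x k j + y k j) mod int (p k ^ \<alpha> k j))"

definition g_neg :: "(nat \<Rightarrow> nat) \<Rightarrow> (nat \<Rightarrow> nat \<Rightarrow> nat) \<Rightarrow> (nat \<Rightarrow> nat \<Rightarrow> int) \<Rightarrow> (nat \<Rightarrow> nat \<Rightarrow> int)" where
  "g_neg p \<alpha> x = (\<lambda>k j. (- x k j) mod int (p k ^ \<alpha> k j))"

definition g_diff :: "(nat \<Rightarrow> nat) \<Rightarrow> (nat \<Rightarrow> nat \<Rightarrow> nat) \<Rightarrow> (nat \<Rightarrow> nat \<Rightarrow> int) \<Rightarrow> (nat \<Rightarrow> nat \<Rightarrow> int) \<Rightarrow> (nat \<Rightarrow> nat \<Rightarrow> int)" where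
  "g_diff p \<alpha> x y = g_add p \<alpha> x (g_neg p \<alpha> y)"

definition embed :: "nat \<Rightarrow> (nat \<Rightarrow> int) \<Rightarrow> (nat \<Rightarrow> nat \<Rightarrow> int)" where
  "embed i g = (\<lambda>k j. if k = i then g j else 0)"

definition is_subgrp :: "'a set \<Rightarrow> ('a \<Rightarrow> 'a \<Rightarrow> 'a) \<Rightarrow> ('a \<Rightarrow> 'a) \<Rightarrow> 'a \<Rightarrow> 'a set \<Rightarrow> bool" where
  "is_subgrp C add neg z H \<longleftrightarrow> H \<subseteq> C \<and> z \<in> H \<and> (\<forall>x\<in>H. \<forall>y\<in>H. add x y \<in> H) \<and> (\<forall>x\<in>H. neg x \<in> H)"

definition Gi_span :: "(nat \<Rightarrow> nat) \<Rightarrow> (nat \<Rightarrow> nat) \<Rightarrow> (nat \<Rightarrow> nat \<Rightarrow> nat) \<Rightarrow> nat \<Rightarrow> (nat \<Rightarrow> int) set \<Rightarrow> (nat \<Rightarrow> int) set" where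
  "Gi_span p r \<alpha> i S = \<Inter> {H. is_subgrp (Gi p r \<alpha> i) (gi_add p \<alpha> i) (gi_neg p \<alpha> i) (\<lambda>_. 0) H \<and> S \<subseteq> H}"

definition Gi_rank :: "(nat \<Rightarrow> nat) \<Rightarrow> (nat \<Rightarrow> nat) \<Rightarrow> (nat \<Rightarrow> nat \<Rightarrow> nat) \<Rightarrow> nat \<Rightarrow> (nat \<Rightarrow> int) set \<Rightarrow> nat" where
  "Gi_rank p r \<alpha> i H = (LEAST n. \<exists>S. finite S \<and> card S = n \<and> S \<subseteq> H \<and> Gi_span p r \<alpha> i S = H)"

text \<open>Composition length of a p-group: len H = e where card H = q^e.\<close>
definition plen :: "nat \<Rightarrow> 'a set \<Rightarrow> nat" where
  "plen q H = (THE e. card H = q ^ e)"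

definition ip :: "(nat \<Rightarrow> nat) \<Rightarrow> (nat \<Rightarrow> nat) \<Rightarrow> (nat \<Rightarrow> nat \<Rightarrow> nat) \<Rightarrow> nat \<Rightarrow> (nat \<Rightarrow> int) \<Rightarrow> (nat \<Rightarrow> int) \<Rightarrow> real" where
  "ip p r \<alpha> i x y = frac (\<Sum>j<r i. real_of_int (x j * y j) / real (p i ^ \<alpha> i j))"

definition qft_entry :: "nat \<Rightarrow> int \<Rightarrow> int \<Rightarrow> complex" where
  "qft_entry N x y = complex_of_real (1 / sqrt (real N)) * exp (2 * complex_of_real pi * \<i> * of_int (x * y) / of_nat N)"

text \<open>QFT_{G_i} is the tensor product of the QFT_{p_i^alpha_ij}: entry <y|QFT_{G_i}|x>.\<close>
definition qftGi_entry :: "(nat \<Rightarrow> nat) \<Rightarrow> (nat \<Rightarrow> nat) \<Rightarrow> (nat \<Rightarrow> nat \<Rightarrow> nat) \<Rightarrow> nat \<Rightarrow> (nat \<Rightarrow> int) \<Rightarrow> (nat \<Rightarrow> int) \<Rightarrow> complex" where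
  "qftGi_entry p r \<alpha> i x y = (\<Prod>j<r i. qft_entry (p i ^ \<alpha> i j) (x j) (y j))"

text \<open>States of H_{G_i} (x) H_G: amplitude functions on basis pairs (g, b), g in G_i, b in G.\<close>
type_synonym state = "((nat \<Rightarrow> int) \<times> (nat \<Rightarrow> nat \<Rightarrow> int)) \<Rightarrow> complex"

definition init_state :: state where
  "init_state = (\<lambda>(g, b). if g = (\<lambda>_. 0) \<and> b = (\<lambda>_ _. 0) then 1 else 0)"

definition qft_I :: "(nat \<Rightarrow> nat) \<Rightarrow> (nat \<Rightarrow> nat) \<Rightarrow> (nat \<Rightarrow> nat \<Rightarrow> nat) \<Rightarrow> nat \<Rightarrow> state \<Rightarrow> state" where
  "qft_I p r \<alpha> i v = (\<lambda>(y, b). \<Sum>x\<in>Gi p r \<alpha> i. qftGi_entry p r \<alpha> i x y * v (x, b))"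

definition qft_dag_I :: "(nat \<Rightarrow> nat) \<Rightarrow> (nat \<Rightarrow> nat) \<Rightarrow> (nat \<Rightarrow> nat \<Rightarrow> nat) \<Rightarrow> nat \<Rightarrow> state \<Rightarrow> state" where
  "qft_dag_I p r \<alpha> i v = (\<lambda>(y, b). \<Sum>x\<in>Gi p r \<alpha> i. cnj (qftGi_entry p r \<alpha> i y x) * v (x, b))"

text \<open>U_{f_i} |g>|b> = |g>|b + f_i(g)>, acting on amplitudes.\<close>
definition U_f :: "(nat \<Rightarrow> nat) \<Rightarrow> (nat \<Rightarrow> nat) \<Rightarrow> (nat \<Rightarrow> nat \<Rightarrow> nat) \<Rightarrow> nat \<Rightarrow> nat \<Rightarrow> ((nat \<Rightarrow> int) \<Rightarrow> (nat \<Rightarrow> nat \<Rightarrow> int)) \<Rightarrow> state \<Rightarrow> state" where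
  "U_f p r \<alpha> m i fi v = (\<lambda>(g, c). if g \<in> Gi p r \<alpha> i \<and> c \<in> Gfull p r \<alpha> m
      then v (g, g_diff p \<alpha> c (fi g)) else 0)"

definition f_node :: "((nat \<Rightarrow> nat \<Rightarrow> int) \<Rightarrow> (nat \<Rightarrow> nat \<Rightarrow> int)) \<Rightarrow> nat \<Rightarrow> (nat \<Rightarrow> int) \<Rightarrow> (nat \<Rightarrow> nat \<Rightarrow> int)" where
  "f_node f i g = f (embed i g)"

definition out_state :: "(nat \<Rightarrow> nat) \<Rightarrow> (nat \<Rightarrow> nat) \<Rightarrow> (nat \<Rightarrow> nat \<Rightarrow> nat) \<Rightarrow> nat \<Rightarrow> ((nat \<Rightarrow> nat \<Rightarrow> int) \<Rightarrow> (nat \<Rightarrow> nat \<Rightarrow> int)) \<Rightarrow> nat \<Rightarrow> state" where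
  "out_state p r \<alpha> m f i = qft_dag_I p r \<alpha> i (U_f p r \<alpha> m i (f_node f i) (qft_I p r \<alpha> i init_state))"

definition meas_prob :: "(nat \<Rightarrow> nat) \<Rightarrow> (nat \<Rightarrow> nat) \<Rightarrow> (nat \<Rightarrow> nat \<Rightarrow> nat) \<Rightarrow> nat \<Rightarrow> ((nat \<Rightarrow> nat \<Rightarrow> int) \<Rightarrow> (nat \<Rightarrow> nat \<Rightarrow> int)) \<Rightarrow> nat \<Rightarrow> (nat \<Rightarrow> int) \<Rightarrow> real" where
  "meas_prob p r \<alpha> m f i y = (\<Sum>b\<in>Gfull p r \<alpha> m. (cmod (out_state p r \<alpha> m f i (y, b)))\<^sup>2)"

definition A_set :: "(nat \<Rightarrow> nat) \<Rightarrow> (nat \<Rightarrow> nat) \<Rightarrow> (nat \<Rightarrow> nat \<Rightarrow> nat) \<Rightarrow> nat \<Rightarrow> (nat \<Rightarrow> int) list \<Rightarrow> (nat \<Rightarrow> int) set" where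
  "A_set p r \<alpha> i ms = {x \<in> Gi p r \<alpha> i. \<forall>mj\<in>set ms. ip p r \<alpha> i mj x = 0}"

definition K_node :: "(nat \<Rightarrow> nat) \<Rightarrow> (nat \<Rightarrow> nat) \<Rightarrow> (nat \<Rightarrow> nat \<Rightarrow> nat) \<Rightarrow> (nat \<Rightarrow> nat \<Rightarrow> int) set \<Rightarrow> nat \<Rightarrow> (nat \<Rightarrow> int) set" where
  "K_node p r \<alpha> K i = {g \<in> Gi p r \<alpha> i. embed i g \<in> K}"

definition success_prob :: "(nat \<Rightarrow> nat) \<Rightarrow> (nat \<Rightarrow> nat) \<Rightarrow> (nat \<Rightarrow> nat \<Rightarrow> nat) \<Rightarrow> nat \<Rightarrow> ((nat \<Rightarrow> nat \<Rightarrow> int) \<Rightarrow> (nat \<Rightarrow> nat \<Rightarrow> int)) \<Rightarrow> (nat \<Rightarrow> nat \<Rightarrow> int) set \<Rightarrow> nat \<Rightarrow> nat \<Rightarrow> real" where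
  "success_prob p r \<alpha> m f K i h =
     (\<Sum>ms\<in>{ms. length ms = h \<and> set ms \<subseteq> Gi p r \<alpha> i \<and> A_set p r \<alpha> i ms = K_node p r \<alpha> K i}.
        prod_list (map (meas_prob p r \<alpha> m f i) ms))"

end

theory Submission imports Defs "HOL-Library.FuncSet" begin

lemma cis_2pi_int: "k \<in> \<int> \<Longrightarrow> cis (2*pi*(t + k)) = cis (2*pi*t)"
  by (simp add: distrib_left cis_mult[symmetric] cis_multiple_2pi)

lemma cis_2pi_eq_1: "cis (2*pi*t) = 1 \<longleftrightarrow> t \<in> \<int>"
proof
  assume "cis (2*pi*t) = 1"
  then have "cos (2*pi*t) = 1" by (metis cis.sel(1) one_complex.sel(1))
  then obtain k :: int where "2*pi*t = real_of_int k * 2 * pi" using cos_one_2pi_int by blast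
  then have "t = of_int k" by simp
  then show "t \<in> \<int>" by simp
qed (use cis_multiple_2pi in auto)

lemma prod_cis: "finite A \<Longrightarrow> (\<Prod>j\<in>A. cis (g j)) = cis (\<Sum>j\<in>A. g j)"
  by (induction A rule: finite_induct) (auto simp: cis_mult)

lemma qft_entry_eq: "qft_entry n a b = of_real (1/sqrt (real n)) * cis (2*pi*(real_of_int (a*b) / real n))"
  unfolding qft_entry_def cis_conv_exp by (simp add: mult_ac)

locale qg =
  fixes p :: "nat \<Rightarrow> nat" and r :: "nat \<Rightarrow> nat" and \<alpha> :: "nat \<Rightarrow> nat \<Rightarrow> nat" and i :: nat
  assumes prime_p: "prime (p i)" and apos: "\<forall>j<r i. 1 \<le> \<alpha> i j"
begin

abbreviation "P \<equiv> p i"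
abbreviation "R \<equiv> r i"
abbreviation "N j \<equiv> int (p i ^ \<alpha> i j)"
abbreviation "G \<equiv> Gi p r \<alpha> i"
abbreviation "add \<equiv> gi_add p \<alpha> i"
abbreviation "neg \<equiv> gi_neg p \<alpha> i"
abbreviation "zero \<equiv> (\<lambda>_::nat. 0::int)"
abbreviation "subgrp H \<equiv> is_subgrp G add neg zero H"

definition S :: "(nat \<Rightarrow> int) \<Rightarrow> (nat \<Rightarrow> int) \<Rightarrow> real" where
  "S x y = (\<Sum>j<R. real_of_int (x j * y j) / real (P ^ \<alpha> i j))"
definition orth where "orth x y \<longleftrightarrow> S x y \<in> \<int>"
definition chi where "chi x y = cis (2*pi*S x y)"
definition ann where "ann X = {y \<in> G. \<forall>x\<in>X. orth x y}"
definition smul :: "nat \<Rightarrow> (nat \<Rightarrow> int) \<Rightarrow> (nat \<Rightarrow> int)" where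
  "smul c x = (\<lambda>j. (int c * x j) mod N j)"

lemma P_gt1: "P > 1" using prime_p prime_gt_1_nat by blast
lemma N_pos: "N j > 0" using P_gt1 by simp

lemma S_sym: "S x y = S y x" unfolding S_def by (simp add: mult.commute)

lemma ip_eq: "ip p r \<alpha> i x y = 0 \<longleftrightarrow> orth x y"
  unfolding ip_def orth_def S_def frac_eq_0_iff by simp

lemma orth_sym: "orth x y = orth y x" unfolding orth_def using S_sym by simp

lemma chi_1_iff: "chi x y = 1 \<longleftrightarrow> orth x y"
  unfolding chi_def orth_def by (rule cis_2pi_eq_1)

lemma mod_div_real:
  assumes M: "(M::int) > 0"
  shows "real_of_int (x * (u mod M)) / real_of_int M = real_of_int (x*u)/real_of_int M - real_of_int (x * (u div M))"
proof -
  have e: "x*(u mod M) + x*(u div M)*M = x*u"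
    by (metis distrib_left div_mult_mod_eq mult.assoc add.commute)
  have e2: "real_of_int (x*(u mod M)) + real_of_int (x*(u div M)) * real_of_int M = real_of_int (x*u)"
    using arg_cong[OF e, of real_of_int] by simp
  have "real_of_int M \<noteq> 0" using M by simp
  then show ?thesis using e2 by (simp add: field_simps)
qed

lemma S_mod: "S x (\<lambda>j. u j mod N j) = S x u - of_int (\<Sum>j<R. x j * (u j div N j))"
proof -
  have *: "real_of_int (x j * (u j mod N j)) / real (P ^ \<alpha> i j)
      = real_of_int (x j * u j) / real (P ^ \<alpha> i j) - of_int (x j * (u j div N j))" for j
    using mod_div_real[OF N_pos[of j], of "x j" "u j"] by (simp only: of_int_of_nat_eq)
  have "S x (\<lambda>j. u j mod N j) = (\<Sum>j<R. real_of_int (x j * u j) / real (P ^ \<alpha> i j) - of_int (x j * (u j div N j)))"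
    unfolding S_def by (rule sum.cong[OF refl]) (rule *)
  also have "\<dots> = S x u - of_int (\<Sum>j<R. x j * (u j div N j))"
    unfolding S_def sum_subtractf of_int_sum ..
  finally show ?thesis .
qed

lemma S_add2: "S x (\<lambda>j. u j + v j) = S x u + S x v"
  unfolding S_def by (simp add: distrib_left add_divide_distrib sum.distrib)
lemma S_neg2: "S x (\<lambda>j. - u j) = - S x u"
  unfolding S_def by (simp add: sum_negf)
lemma S_smul2: "S x (\<lambda>j. int c * u j) = real c * S x u"
  unfolding S_def sum_distrib_left by (rule sum.cong) (auto simp: field_simps)
lemma S_zero2: "S x zero = 0" unfolding S_def by simp

lemma chi_mod: "chi x (\<lambda>j. u j mod N j) = chi x u"
proof -
  have "- real_of_int (\<Sum>j<R. x j * (u j div N j)) \<in> \<int>" by (intro Ints_minus Ints_of_int)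
  from cis_2pi_int[OF this, of "S x u"] show ?thesis
    unfolding chi_def S_mod by (simp only: diff_conv_add_uminus)
qed

lemma chi_add: "chi x (add y z) = chi x y * chi x z"
proof -
  have "chi x (add y z) = chi x (\<lambda>j. y j + z j)" unfolding gi_add_def by (rule chi_mod)
  also have "\<dots> = chi x y * chi x z" unfolding chi_def S_add2 by (simp add: cis_mult distrib_left)
  finally show ?thesis .
qed

lemma orth_add: "orth x y \<Longrightarrow> orth x z \<Longrightarrow> orth x (add y z)"
  by (simp add: chi_1_iff[symmetric] chi_add)
lemma orth_neg: "orth x y \<Longrightarrow> orth x (neg y)"
proof -
  assume "orth x y"
  have "chi x (neg y) = chi x (\<lambda>j. - y j)" unfolding gi_neg_def by (rule chi_mod)
  also have "\<dots> = cis (- (2*pi*S x y))" unfolding chi_def S_neg2 by simp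
  also have "\<dots> = cnj (chi x y)" unfolding chi_def by (simp add: cis_cnj)
  also have "\<dots> = 1" using \<open>orth x y\<close> chi_1_iff[of x y] by simp
  finally have "chi x (neg y) = 1" .
  then show ?thesis by (simp only: chi_1_iff)
qed
lemma orth_zero: "orth x zero" unfolding orth_def S_zero2 by simp

lemma chi_sym: "chi x y = chi y x" unfolding chi_def using S_sym by simp
lemma chi_zero: "chi x zero = 1" unfolding chi_def S_zero2 by simp
lemma chi_cnj_mult: "cnj (chi x y) * chi x y = 1"
  unfolding chi_def by (simp add: cis_cnj cis_mult)


lemma S_zero1: "S zero x = 0" unfolding S_def by simp
lemma orth_zero1: "orth zero x" unfolding orth_def S_zero1 by simp

lemma memG: "x \<in> G \<longleftrightarrow> (\<forall>j<R. 0 \<le> x j \<and> x j < N j) \<and> (\<forall>j\<ge>R. x j = 0)"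
  unfolding Gi_def by simp

lemma zero_in: "zero \<in> G" unfolding memG using N_pos by simp

lemma add_in: "x \<in> G \<Longrightarrow> y \<in> G \<Longrightarrow> add x y \<in> G"
  unfolding memG gi_add_def using N_pos by simp

lemma neg_in: "x \<in> G \<Longrightarrow> neg x \<in> G"
  unfolding memG gi_neg_def using N_pos by simp

lemma smul_in_G: "x \<in> G \<Longrightarrow> smul c x \<in> G"
  unfolding memG smul_def using N_pos by simp

lemma mod_id: "x \<in> G \<Longrightarrow> (\<lambda>j. x j mod N j) = x"
proof
  fix j assume x: "x \<in> G"
  show "x j mod N j = x j"
  proof (cases "j < R")
    case True then show ?thesis using x unfolding memG by (simp add: mod_pos_pos_trivial)
  next
    case False then show ?thesis using x unfolding memG by simp
  qed
qed

lemma add_zero: "x \<in> G \<Longrightarrow> add x zero = x"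
  unfolding gi_add_def using mod_id by simp
lemma zero_add: "x \<in> G \<Longrightarrow> add zero x = x"
  unfolding gi_add_def using mod_id by simp
lemma add_comm: "add x y = add y x"
  unfolding gi_add_def by (simp add: add.commute)
lemma add_assoc: "add (add x y) z = add x (add y z)"
  unfolding gi_add_def by (simp add: mod_add_left_eq mod_add_right_eq add.assoc)
lemma add_neg: "add x (neg x) = zero"
  unfolding gi_add_def gi_neg_def by (simp add: mod_add_right_eq)
lemma neg_add: "add (neg x) x = zero"
  by (subst add_comm) (rule add_neg)
lemma neg_add_cancel: "y \<in> G \<Longrightarrow> add (neg x) (add x y) = y"
  unfolding add_assoc[symmetric] neg_add by (rule zero_add)
lemma add_neg_cancel: "y \<in> G \<Longrightarrow> add x (add (neg x) y) = y"
  unfolding add_assoc[symmetric] add_neg by (rule zero_add)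
lemma add_neg_right: "x \<in> G \<Longrightarrow> add (add x (neg y)) y = x"
  unfolding add_assoc neg_add by (rule add_zero)
lemma add_cancel: "y \<in> G \<Longrightarrow> z \<in> G \<Longrightarrow> add x y = add x z \<Longrightarrow> y = z"
  by (metis neg_add_cancel)

lemma subgrpD:
  assumes "subgrp H"
  shows "H \<subseteq> G" "zero \<in> H" "x \<in> H \<Longrightarrow> y \<in> H \<Longrightarrow> add x y \<in> H" "x \<in> H \<Longrightarrow> neg x \<in> H"
  using assms unfolding is_subgrp_def by auto

lemma subgrp_G: "subgrp G"
  unfolding is_subgrp_def using zero_in add_in neg_in by auto

lemma smul_Suc: "smul (Suc c) x = add x (smul c x)"
  unfolding smul_def gi_add_def by (simp add: mod_add_right_eq algebra_simps)
lemma smul_0: "smul 0 x = zero"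
  unfolding smul_def by simp

lemma smul_in: assumes "subgrp H" "x \<in> H" shows "smul c x \<in> H"
proof (induction c)
  case 0 then show ?case using subgrpD[OF assms(1)] smul_0 by simp
next
  case (Suc c) then show ?case using subgrpD[OF assms(1)] assms(2) smul_Suc by simp
qed

lemma ann_subgrp: "subgrp (ann X)"
  unfolding is_subgrp_def ann_def using zero_in add_in neg_in orth_zero orth_add orth_neg by auto

lemma finite_card_G: "finite G \<and> card G = P ^ (\<Sum>j<R. \<alpha> i j)"
proof -
  let ?T = "PiE {..<R} (\<lambda>j. {0..<N j})"
  have inj: "inj_on (\<lambda>x. restrict x {..<R}) G"
  proof
    fix x y assume x: "x \<in> G" and y: "y \<in> G" and e: "restrict x {..<R} = restrict y {..<R}"
    show "x = y"
    proof
      fix j show "x j = y j"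
      proof (cases "j < R")
        case True then show ?thesis using fun_cong[OF e, of j] by simp
      next
        case False then show ?thesis using x y unfolding memG by simp
      qed
    qed
  qed
  have img: "(\<lambda>x. restrict x {..<R}) ` G = ?T"
  proof
    show "(\<lambda>x. restrict x {..<R}) ` G \<subseteq> ?T"
    proof (rule image_subsetI)
      fix x assume "x \<in> G"
      then have "\<forall>j<R. 0 \<le> x j \<and> x j < N j" unfolding memG by blast
      then show "restrict x {..<R} \<in> ?T" unfolding restrict_PiE_iff by auto
    qed
    show "?T \<subseteq> (\<lambda>x. restrict x {..<R}) ` G"
    proof
      fix v assume v: "v \<in> ?T"
      let ?x = "\<lambda>j. if j < R then v j else 0"
      have "\<forall>j<R. v j \<in> {0..<N j}" using v by (auto simp: PiE_iff)
      then have xG: "?x \<in> G" unfolding memG by auto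
      have eqv: "restrict ?x {..<R} = v"
      proof
        fix j show "restrict ?x {..<R} j = v j" using PiE_arb[OF v, of j] by (cases "j<R") auto
      qed
      have "restrict ?x {..<R} \<in> (\<lambda>x. restrict x {..<R}) ` G" using xG by (rule imageI)
      then show "v \<in> (\<lambda>x. restrict x {..<R}) ` G" unfolding eqv .
    qed
  qed
  have fT: "finite ?T" by (intro finite_PiE) auto
  have "card ?T = (\<Prod>j<R. card {0..<N j})" by (rule card_PiE) simp
  also have "\<dots> = (\<Prod>j<R. P ^ \<alpha> i j)" by (simp add: nat_power_eq del: of_nat_power)
  also have "\<dots> = P ^ (\<Sum>j<R. \<alpha> i j)" by (simp add: power_sum)
  finally have cT: "card ?T = P ^ (\<Sum>j<R. \<alpha> i j)" .
  have fG: "finite G" using fT img inj finite_image_iff by metis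
  have "card G = card ?T" using card_image[OF inj] img by simp
  then show ?thesis using fG cT by simp
qed

lemma finite_G: "finite G" using finite_card_G by simp
lemma card_G: "card G = P ^ (\<Sum>j<R. \<alpha> i j)" using finite_card_G by simp
lemma card_G_pos: "card G > 0" using finite_G zero_in card_gt_0_iff by blast

lemma Ints_01: "(t::real) \<in> \<int> \<Longrightarrow> 0 < t \<Longrightarrow> t < 1 \<Longrightarrow> False"
  by (metis Ints_cases of_int_0_less_iff of_int_less_1_iff not_less zero_less_iff_neq_zero int_one_le_iff_zero_less)

lemma nondeg: assumes y: "y \<in> G" and o: "\<forall>x\<in>G. orth y x" shows "y = zero"
proof
  fix j show "y j = zero j"
  proof (cases "j < R")
    case False then show ?thesis using y unfolding memG by simp
  next
    case True
    show ?thesis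
    proof (rule ccontr)
      assume ne: "y j \<noteq> zero j"
      let ?e = "\<lambda>k. if k = j then 1 else 0 :: int"
      have "1 < N j"
      proof -
        have "P ^ 1 \<le> P ^ \<alpha> i j" using apos True P_gt1 by (intro power_increasing) auto
        then have "1 < P ^ \<alpha> i j" using P_gt1 by simp
        then show ?thesis by (metis of_nat_1 of_nat_less_iff)
      qed
      then have eG: "?e \<in> G" using True P_gt1 unfolding memG by auto
      have "S y ?e = (\<Sum>k<R. if k = j then real_of_int (y j) / real (P ^ \<alpha> i j) else 0)"
        unfolding S_def by (rule sum.cong) auto
      also have "\<dots> = real_of_int (y j) / real (P ^ \<alpha> i j)" using True by simp
      finally have Se: "S y ?e = real_of_int (y j) / real (P ^ \<alpha> i j)" .
      have y0: "0 < y j" "y j < N j" using y True ne unfolding memG by auto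
      have "0 < S y ?e" unfolding Se using y0 N_pos[of j] by simp
      moreover have "S y ?e < 1" unfolding Se using y0 N_pos[of j]
        by (simp add: divide_less_eq of_nat_less_iff[symmetric] del: of_nat_power)
      moreover have "S y ?e \<in> \<int>" using o eG unfolding orth_def by blast
      ultimately show False using Ints_01 by blast
    qed
  qed
qed

lemma finite_subgrp: "subgrp H \<Longrightarrow> finite H"
  using subgrpD(1) finite_G finite_subset by blast

lemma add_bij: assumes H: "subgrp H" and x0: "x0 \<in> H" shows "bij_betw (add x0) H H"
proof (rule bij_betw_imageI)
  show "inj_on (add x0) H" using add_cancel subgrpD(1)[OF H] by (meson inj_onI subsetD)
  show "add x0 ` H = H"
  proof
    show "add x0 ` H \<subseteq> H" using subgrpD(3)[OF H] x0 by auto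
    show "H \<subseteq> add x0 ` H"
    proof
      fix x assume x: "x \<in> H"
      have "x = add x0 (add (neg x0) x)" using add_neg_cancel x subgrpD(1)[OF H] by auto
      moreover have "add (neg x0) x \<in> H" using subgrpD[OF H] x x0 by auto
      ultimately show "x \<in> add x0 ` H" by blast
    qed
  qed
qed

lemma char_sum:
  assumes H: "subgrp H"
  shows "(\<Sum>x\<in>H. chi y x) = (if \<forall>x\<in>H. orth y x then of_nat (card H) else 0)"
proof (cases "\<forall>x\<in>H. orth y x")
  case True
  then have "(\<Sum>x\<in>H. chi y x) = (\<Sum>x\<in>H. 1)" using chi_1_iff by (intro sum.cong) auto
  then show ?thesis using True by simp
next
  case False
  then obtain x0 where x0: "x0 \<in> H" "chi y x0 \<noteq> 1" using chi_1_iff by blast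
  have "(\<Sum>x\<in>H. chi y x) = (\<Sum>x\<in>H. chi y (add x0 x))"
    using sum.reindex_bij_betw[OF add_bij[OF H x0(1)], of "chi y"] by simp
  also have "\<dots> = chi y x0 * (\<Sum>x\<in>H. chi y x)" by (simp add: chi_add sum_distrib_left)
  finally have "(1 - chi y x0) * (\<Sum>x\<in>H. chi y x) = 0" by (simp add: algebra_simps)
  then show ?thesis using x0 False by auto
qed

lemma orth_all_G: "x \<in> G \<Longrightarrow> (\<forall>y\<in>G. orth x y) \<longleftrightarrow> x = zero"
  using nondeg orth_zero1 by blast

lemma duality: assumes H: "subgrp H" shows "card H * card (ann H) = card G"
proof -
  have fH: "finite H" using finite_subgrp[OF H] .
  have HG: "H \<subseteq> G" using subgrpD(1)[OF H] .
  have "(\<Sum>y\<in>G. \<Sum>x\<in>H. chi y x) = (\<Sum>y\<in>G. if y \<in> ann H then of_nat (card H) else 0)"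
  proof (rule sum.cong[OF refl])
    fix y assume y: "y \<in> G"
    have "(\<forall>x\<in>H. orth y x) \<longleftrightarrow> y \<in> ann H" unfolding ann_def using y orth_sym by auto
    then show "(\<Sum>x\<in>H. chi y x) = (if y \<in> ann H then of_nat (card H) else 0)"
      using char_sum[OF H, of y] by simp
  qed
  also have "\<dots> = (\<Sum>y\<in>{y\<in>G. y \<in> ann H}. (of_nat (card H) :: complex))"
    by (subst sum.inter_filter[OF finite_G]) simp
  also have "{y\<in>G. y \<in> ann H} = ann H" unfolding ann_def by auto
  finally have l: "(\<Sum>y\<in>G. \<Sum>x\<in>H. chi y x) = of_nat (card H * card (ann H))" by simp
  have "(\<Sum>y\<in>G. \<Sum>x\<in>H. chi y x) = (\<Sum>x\<in>H. \<Sum>y\<in>G. chi x y)"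
    by (subst sum.swap) (simp add: chi_sym)
  also have "\<dots> = (\<Sum>x\<in>H. if x = zero then of_nat (card G) else 0)"
  proof (rule sum.cong[OF refl])
    fix x assume x: "x \<in> H"
    then have "x \<in> G" using HG by auto
    then show "(\<Sum>y\<in>G. chi x y) = (if x = zero then of_nat (card G) else 0)"
      using char_sum[OF subgrp_G, of x] orth_all_G by simp
  qed
  also have "\<dots> = of_nat (card G)" using subgrpD(2)[OF H] fH by simp
  finally have "of_nat (card H * card (ann H)) = (of_nat (card G) :: complex)" using l by simp
  then show ?thesis using of_nat_eq_iff by blast
qed

lemma card_subgrp_pow: assumes H: "subgrp H" shows "\<exists>e. card H = P ^ e"
proof -
  have "card H dvd P ^ (\<Sum>j<R. \<alpha> i j)" using duality[OF H] card_G by (metis dvd_triv_left)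
  then show ?thesis using divides_primepow_nat[OF prime_p] by blast
qed


lemma chi_neg: "chi x (neg y) = cnj (chi x y)"
proof -
  have "chi x (neg y) = chi x (\<lambda>j. - y j)" unfolding gi_neg_def by (rule chi_mod)
  also have "\<dots> = cis (- (2*pi*S x y))" unfolding chi_def S_neg2 by simp
  also have "\<dots> = cnj (chi x y)" unfolding chi_def by (simp add: cis_cnj)
  finally show ?thesis .
qed

lemma smul_add: "smul c (add x y) = add (smul c x) (smul c y)"
  unfolding smul_def gi_add_def by (rule ext) (simp only: mod_mult_right_eq mod_add_eq distrib_left)

lemma smul_neg: "smul c (neg x) = neg (smul c x)"
  unfolding smul_def gi_neg_def by (rule ext) (simp only: mod_mult_right_eq mod_minus_eq mult_minus_right)

lemma smul_mult: "smul a (smul b x) = smul (a*b) x"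
  unfolding smul_def by (simp add: mod_mult_right_eq mult.assoc)

lemma smul_1: "x \<in> G \<Longrightarrow> smul 1 x = x"
  unfolding smul_def using mod_id by simp

lemma smul_pow_zero: assumes x: "x \<in> G" shows "smul (P ^ (\<Sum>j<R. \<alpha> i j)) x = zero"
proof
  fix j show "smul (P ^ (\<Sum>j<R. \<alpha> i j)) x j = zero j"
  proof (cases "j < R")
    case True
    have "\<alpha> i j \<le> (\<Sum>j<R. \<alpha> i j)" using True by (intro member_le_sum) auto
    then have "P ^ \<alpha> i j dvd P ^ (\<Sum>j<R. \<alpha> i j)" by (rule le_imp_power_dvd)
    then have "N j dvd int (P ^ (\<Sum>j<R. \<alpha> i j)) * x j" by (simp add: of_nat_dvd_iff[symmetric] del: of_nat_power)
    then show ?thesis unfolding smul_def by simp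
  next
    case False then show ?thesis using x unfolding memG smul_def by simp
  qed
qed

end

locale qgK = qg +
  fixes Kp :: "(nat \<Rightarrow> int) set"
  assumes Kp: "subgrp Kp"
begin

abbreviation "H \<equiv> ann Kp"
definition "W = {x \<in> G. smul P x \<in> Kp}"
definition "Gp = {y \<in> G. smul P y = zero}"

lemma KpG: "Kp \<subseteq> G" using subgrpD(1)[OF Kp] .
lemma fin_Kp: "finite Kp" using finite_subgrp[OF Kp] .
lemma card_Kp_pos: "card Kp > 0" using fin_Kp subgrpD(2)[OF Kp] card_gt_0_iff by blast
lemma fin_H: "finite H" using finite_subgrp[OF ann_subgrp] .
lemma dualK: "card Kp * card H = card G" using duality[OF Kp] .

lemma Lx_bound:
  assumes x: "x \<in> G" "x \<notin> Kp"
  shows "card {y \<in> H. orth x y} * P \<le> card H"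
proof -
  define L where "L = ann (insert x Kp)"
  have L_eq: "{y \<in> H. orth x y} = L" unfolding L_def ann_def by auto
  define A2 where "A2 = ann L"
  have sL: "subgrp L" unfolding L_def by (rule ann_subgrp)
  have sA2: "subgrp A2" unfolding A2_def by (rule ann_subgrp)
  have "insert x Kp \<subseteq> A2"
    unfolding A2_def L_def ann_def using x KpG orth_sym by blast
  then have "Kp \<subset> A2" using x by blast
  then have lt: "card Kp < card A2" using finite_subgrp[OF sA2] psubset_card_mono by blast
  obtain a where a: "card A2 = P ^ a" using card_subgrp_pow[OF sA2] by blast
  obtain b where b: "card Kp = P ^ b" using card_subgrp_pow[OF Kp] by blast
  have "b < a" using lt a b P_gt1 power_less_imp_less_exp by auto
  then have "P ^ Suc b \<le> P ^ a" using P_gt1 by (intro power_increasing) auto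
  then have pk: "P * card Kp \<le> card A2" using a b by simp
  have d1: "card L * card A2 = card G" unfolding A2_def by (rule duality[OF sL])
  have "card L * P * card Kp \<le> card L * card A2" using pk by (simp add: mult.assoc)
  also have "\<dots> = card Kp * card H" using d1 dualK by simp
  finally have "card L * P * card Kp \<le> card H * card Kp" by (simp add: mult.commute)
  then have "card L * P \<le> card H" using card_Kp_pos by simp
  then show ?thesis using L_eq by simp
qed

lemma W_witness:
  assumes ms: "set ms \<subseteq> H" and ne: "ann (set ms) \<noteq> Kp"
  shows "card Kp \<le> card {x \<in> W - Kp. \<forall>y\<in>set ms. orth y x}"
proof -
  define A where "A = ann (set ms)"
  have sA: "subgrp A" unfolding A_def by (rule ann_subgrp)
  have KA: "Kp \<subseteq> A" unfolding A_def ann_def using ms KpG unfolding ann_def using orth_sym by blast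
  then obtain x0 where x0: "x0 \<in> A" "x0 \<notin> Kp" using ne unfolding A_def by blast
  have x0G: "x0 \<in> G" using x0 subgrpD(1)[OF sA] by auto
  let ?Q = "\<lambda>t. smul (P ^ t) x0 \<in> Kp"
  have QT: "?Q (\<Sum>j<R. \<alpha> i j)" using smul_pow_zero[OF x0G] subgrpD(2)[OF Kp] by simp
  define t0 where "t0 = (LEAST t. ?Q t)"
  have Qt0: "?Q t0" unfolding t0_def using QT by (rule LeastI)
  have "t0 \<noteq> 0"
  proof
    assume "t0 = 0"
    then have "smul 1 x0 \<in> Kp" using Qt0 by simp
    then show False using x0 smul_1[OF x0G] by simp
  qed
  then obtain t1 where t1: "t0 = Suc t1" using not0_implies_Suc by blast
  have nQ: "\<not> ?Q t1" using t1 unfolding t0_def by (metis Suc_n_not_le_n Least_le)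
  define x1 where "x1 = smul (P ^ t1) x0"
  have x1A: "x1 \<in> A" unfolding x1_def using smul_in[OF sA x0(1)] .
  have x1G: "x1 \<in> G" using x1A subgrpD(1)[OF sA] by auto
  have x1K: "x1 \<notin> Kp" using nQ x1_def by simp
  have x1W: "smul P x1 \<in> Kp" unfolding x1_def smul_mult using Qt0 t1 by (simp add: mult.commute)
  have sub: "add x1 ` Kp \<subseteq> {x \<in> W - Kp. \<forall>y\<in>set ms. orth y x}"
  proof
    fix z assume "z \<in> add x1 ` Kp"
    then obtain k where k: "k \<in> Kp" "z = add x1 k" by blast
    have kG: "k \<in> G" using k KpG by auto
    have zA: "z \<in> A" using k KA subgrpD(3)[OF sA x1A] by auto
    have zG: "z \<in> G" using zA subgrpD(1)[OF sA] by auto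
    have "smul P z = add (smul P x1) (smul P k)" using k smul_add by simp
    then have zW: "z \<in> W" unfolding W_def using zG x1W smul_in[OF Kp k(1)] subgrpD(3)[OF Kp] by simp
    have "z \<notin> Kp"
    proof
      assume "z \<in> Kp"
      then have "add z (neg k) \<in> Kp" using subgrpD(3,4)[OF Kp] k by auto
      moreover have "add z (neg k) = x1" using k add_assoc add_neg add_zero[OF x1G] by simp
      ultimately show False using x1K by simp
    qed
    moreover have "\<forall>y\<in>set ms. orth y z" using zA unfolding A_def ann_def by auto
    ultimately show "z \<in> {x \<in> W - Kp. \<forall>y\<in>set ms. orth y x}" using zW by simp
  qed
  have inj: "inj_on (add x1) Kp" using add_cancel KpG by (meson inj_onI subsetD)
  have fin: "finite {x \<in> W - Kp. \<forall>y\<in>set ms. orth y x}"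
    by (rule finite_subset[OF _ finite_G]) (auto simp: W_def)
  have "card Kp = card (add x1 ` Kp)" using card_image[OF inj] by simp
  also have "\<dots> \<le> card {x \<in> W - Kp. \<forall>y\<in>set ms. orth y x}" using card_mono[OF fin sub] .
  finally show ?thesis .
qed


lemma card_filter_sum: "finite X \<Longrightarrow> card {x \<in> X. Q x} = (\<Sum>x\<in>X. if Q x then 1 else 0)"
  by (simp add: sum.inter_filter[symmetric])

lemma bad_count:
  "card {ms. length ms = h \<and> set ms \<subseteq> H \<and> ann (set ms) \<noteq> Kp} * card Kp * P ^ h \<le> card W * card H ^ h"
proof -
  define Bad where "Bad = {ms. length ms = h \<and> set ms \<subseteq> H \<and> ann (set ms) \<noteq> Kp}"
  define X where "X = W - Kp"
  define L where "L x = {y \<in> H. orth x y}" for x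
  have finB: "finite Bad"
    by (rule finite_subset[OF _ finite_lists_length_eq[OF fin_H, of h]]) (auto simp: Bad_def)
  have finX: "finite X" by (rule finite_subset[OF _ finite_G]) (auto simp: X_def W_def)
  have XG: "x \<in> X \<Longrightarrow> x \<in> G \<and> x \<notin> Kp" for x unfolding X_def W_def by auto
  have "card Bad * card Kp = (\<Sum>ms\<in>Bad. card Kp)" by simp
  also have "\<dots> \<le> (\<Sum>ms\<in>Bad. card {x \<in> X. \<forall>y\<in>set ms. orth y x})"
    by (rule sum_mono) (use W_witness in \<open>auto simp: Bad_def X_def\<close>)
  also have "\<dots> = (\<Sum>ms\<in>Bad. \<Sum>x\<in>X. if (\<forall>y\<in>set ms. orth y x) then 1 else 0)"
    using card_filter_sum[OF finX] by simp
  also have "\<dots> = (\<Sum>x\<in>X. \<Sum>ms\<in>Bad. if (\<forall>y\<in>set ms. orth y x) then 1 else 0)"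
    by (rule sum.swap)
  also have "\<dots> = (\<Sum>x\<in>X. card {ms \<in> Bad. \<forall>y\<in>set ms. orth y x})"
    using card_filter_sum[OF finB] by simp
  also have "\<dots> \<le> (\<Sum>x\<in>X. card {ms. set ms \<subseteq> L x \<and> length ms = h})"
  proof (rule sum_mono)
    fix x assume "x \<in> X"
    have fL: "finite (L x)" unfolding L_def using fin_H by simp
    show "card {ms \<in> Bad. \<forall>y\<in>set ms. orth y x} \<le> card {ms. set ms \<subseteq> L x \<and> length ms = h}"
      by (rule card_mono[OF finite_lists_length_eq[OF fL]]) (auto simp: Bad_def L_def orth_sym)
  qed
  also have "\<dots> = (\<Sum>x\<in>X. card (L x) ^ h)"
    by (rule sum.cong[OF refl]) (simp add: card_lists_length_eq L_def fin_H)
  finally have b1: "card Bad * card Kp \<le> (\<Sum>x\<in>X. card (L x) ^ h)" .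
  have "card Bad * card Kp * P ^ h \<le> (\<Sum>x\<in>X. card (L x) ^ h) * P ^ h"
    using b1 by (rule mult_right_mono) simp
  also have "\<dots> = (\<Sum>x\<in>X. (card (L x) * P) ^ h)" by (simp add: sum_distrib_right power_mult_distrib)
  also have "\<dots> \<le> (\<Sum>x\<in>X. card H ^ h)"
  proof (rule sum_mono)
    fix x assume "x \<in> X"
    then have "card (L x) * P \<le> card H" unfolding L_def using Lx_bound XG by blast
    then show "(card (L x) * P) ^ h \<le> card H ^ h" by (rule power_mono) simp
  qed
  also have "\<dots> = card X * card H ^ h" by simp
  also have "\<dots> \<le> card W * card H ^ h"
  proof (rule mult_right_mono)
    show "card X \<le> card W" unfolding X_def
      by (rule card_mono) (auto intro: finite_subset[OF _ finite_G] simp: W_def)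
  qed simp
  finally show ?thesis unfolding Bad_def .
qed

lemma W_le_G: "card W \<le> card G"
  by (rule card_mono[OF finite_G]) (auto simp: W_def)

lemma W_le_Gp: "card W \<le> card Gp * card Kp"
proof -
  define F where "F k = {x \<in> G. smul P x = k}" for k
  have Weq: "W = (\<Union>k\<in>Kp. F k)" unfolding W_def F_def by auto
  have Fk: "card (F k) \<le> card Gp" if k: "k \<in> Kp" for k
  proof (cases "F k = {}")
    case True then show ?thesis by simp
  next
    case False
    then obtain x0 where x0: "x0 \<in> G" "smul P x0 = k" unfolding F_def by blast
    have finGp: "finite Gp" by (rule finite_subset[OF _ finite_G]) (auto simp: Gp_def)
    have inj: "inj_on (\<lambda>x. add x (neg x0)) (F k)"
    proof
      fix x y assume "x \<in> F k" "y \<in> F k" "add x (neg x0) = add y (neg x0)"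
      then show "x = y" using add_neg_right unfolding F_def by (metis (no_types, lifting) mem_Collect_eq)
    qed
    have "(\<lambda>x. add x (neg x0)) ` F k \<subseteq> Gp"
    proof
      fix z assume "z \<in> (\<lambda>x. add x (neg x0)) ` F k"
      then obtain x where x: "x \<in> G" "smul P x = k" "z = add x (neg x0)" unfolding F_def by blast
      have "smul P z = add k (neg k)" using x x0 smul_add smul_neg by simp
      then have "smul P z = zero" using add_neg by simp
      moreover have "z \<in> G" using x x0 add_in neg_in by simp
      ultimately show "z \<in> Gp" unfolding Gp_def by simp
    qed
    then show ?thesis using card_image[OF inj] card_mono[OF finGp] by metis
  qed
  have "card W \<le> (\<Sum>k\<in>Kp. card (F k))" unfolding Weq by (rule card_UN_le[OF fin_Kp])
  also have "\<dots> \<le> (\<Sum>k\<in>Kp. card Gp)" by (rule sum_mono) (rule Fk)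
  also have "\<dots> = card Gp * card Kp" by simp
  finally show ?thesis .
qed


lemma frac_div_P: "frac (real_of_int z / real P) = real_of_int (z mod int P) / real P"
proof -
  have P0: "real P > 0" using P_gt1 by simp
  have e: "real_of_int z = real P * real_of_int (z div int P) + real_of_int (z mod int P)"
    by (metis of_int_add of_int_mult of_int_of_nat_eq div_mult_mod_eq mult.commute)
  have "real_of_int z / real P - real_of_int (z mod int P) / real P = real_of_int (z div int P)"
    using P0 by (simp add: e field_simps)
  moreover have "0 \<le> real_of_int (z mod int P) / real P" using P0 P_gt1 by simp
  moreover have "real_of_int (z mod int P) / real P < 1"
  proof -
    have "z mod int P < int P" using P_gt1 by simp
    then have "real_of_int (z mod int P) < real P" by linarith
    then show ?thesis using P0 by simp
  qed
  ultimately show ?thesis unfolding frac_unique_iff by (metis Ints_of_int)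
qed

lemma Gp_bound:
  assumes fin: "finite Sg" and SgG: "Sg \<subseteq> G" and span: "Gi_span p r \<alpha> i Sg = G"
  shows "card Gp \<le> P ^ card Sg"
proof -
  define V where "V = (\<lambda>c. real c / real P) ` {..<P}"
  define \<phi> where "\<phi> y = restrict (\<lambda>s. frac (S s y)) Sg" for y
  have inV: "frac (S s y) \<in> V" if y: "y \<in> Gp" for s y
  proof -
    have "chi s (smul P y) = chi s (\<lambda>j. int P * y j)" unfolding smul_def by (rule chi_mod)
    also have "\<dots> = cis (2 * pi * (real P * S s y))" unfolding chi_def S_smul2 ..
    finally have "cis (2 * pi * (real P * S s y)) = 1" using y chi_zero unfolding Gp_def by simp
    then have "real P * S s y \<in> \<int>" using cis_2pi_eq_1 by simp
    then obtain z where z: "real P * S s y = real_of_int z" by (metis Ints_cases)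
    have "S s y = real_of_int z / real P" using z P_gt1 by (simp add: field_simps)
    then have f: "frac (S s y) = real_of_int (z mod int P) / real P" using frac_div_P by simp
    define c where "c = nat (z mod int P)"
    have "z mod int P = int c" unfolding c_def using P_gt1 by simp
    then have f2: "frac (S s y) = real c / real P" unfolding f by simp
    have "c < P" unfolding c_def using P_gt1 by (simp add: nat_less_iff)
    then show ?thesis unfolding f2 V_def by (intro image_eqI[where x=c]) auto
  qed
  have inj: "inj_on \<phi> Gp"
  proof
    fix y y' assume y: "y \<in> Gp" and y': "y' \<in> Gp" and e: "\<phi> y = \<phi> y'"
    have yG: "y \<in> G" and y'G: "y' \<in> G" using y y' unfolding Gp_def by auto
    define z where "z = add y (neg y')"
    have zG: "z \<in> G" unfolding z_def using yG y'G add_in neg_in by simp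
    have "Sg \<subseteq> ann {z}"
    proof
      fix s assume s: "s \<in> Sg"
      have "frac (S s y) = frac (S s y')" using fun_cong[OF e, of s] s unfolding \<phi>_def by simp
      then have "S s y = S s y' + of_int (floor (S s y) - floor (S s y'))" unfolding frac_def by simp
      then have "chi s y = chi s y'" unfolding chi_def using cis_2pi_int[of "of_int (floor (S s y) - floor (S s y'))" "S s y'"]
        by (metis Ints_of_int)
      then have "chi s z = chi s y' * cnj (chi s y')" unfolding z_def chi_add chi_neg by simp
      also have "\<dots> = 1" using chi_cnj_mult by (simp add: mult.commute)
      finally have "orth z s" using chi_1_iff orth_sym by metis
      then show "s \<in> ann {z}" unfolding ann_def using s SgG by auto
    qed
    then have "Gi_span p r \<alpha> i Sg \<subseteq> ann {z}" unfolding Gi_span_def using ann_subgrp by blast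
    then have "\<forall>x\<in>G. orth z x" using span unfolding ann_def by auto
    then have "z = zero" using nondeg zG by blast
    then show "y = y'" using add_neg_right[OF yG, of y'] zero_add[OF y'G] unfolding z_def by simp
  qed
  have sub: "\<phi> ` Gp \<subseteq> PiE Sg (\<lambda>_. V)" unfolding \<phi>_def using inV by auto
  have finV: "finite V" unfolding V_def by simp
  have "card Gp = card (\<phi> ` Gp)" using card_image[OF inj] by simp
  also have "\<dots> \<le> card (PiE Sg (\<lambda>_. V))" by (rule card_mono[OF finite_PiE[OF fin] sub]) (use finV in simp)
  also have "\<dots> = card V ^ card Sg" by (simp add: card_PiE[OF fin])
  also have "\<dots> \<le> P ^ card Sg"
  proof (rule power_mono)
    show "card V \<le> P" unfolding V_def using card_image_le[of "{..<P}"] by (metis card_lessThan finite_lessThan)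
  qed simp
  finally show ?thesis .
qed


definition cc :: real where "cc = (\<Prod>j<R. 1 / sqrt (real (P ^ \<alpha> i j)))"

lemma qftGi_eq: "qftGi_entry p r \<alpha> i x y = of_real cc * chi x y"
proof -
  have "qftGi_entry p r \<alpha> i x y = (\<Prod>j<R. of_real (1/sqrt (real (P ^ \<alpha> i j))) * cis (2*pi*(real_of_int (x j * y j) / real (P ^ \<alpha> i j))))"
    unfolding qftGi_entry_def qft_entry_eq ..
  also have "\<dots> = of_real cc * cis (\<Sum>j<R. 2*pi*(real_of_int (x j * y j) / real (P ^ \<alpha> i j)))"
    unfolding prod.distrib prod_cis[OF finite_lessThan] cc_def of_real_prod ..
  also have "\<dots> = of_real cc * chi x y"
    unfolding chi_def S_def sum_distrib_left ..
  finally show ?thesis .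
qed

lemma cc_sq: "cc ^ 2 = 1 / real (card G)"
proof -
  have "cc ^ 2 = (\<Prod>j<R. (1 / sqrt (real (P ^ \<alpha> i j))) ^ 2)" unfolding cc_def by (rule prod_power_distrib)
  also have "\<dots> = (\<Prod>j<R. 1 / real (P ^ \<alpha> i j))" by (simp add: power_divide del: of_nat_power)
  also have "\<dots> = 1 / real (\<Prod>j<R. P ^ \<alpha> i j)" by (simp add: prod_dividef del: of_nat_power)
  also have "(\<Prod>j<R. P ^ \<alpha> i j) = card G" unfolding card_G by (simp add: power_sum)
  finally show ?thesis .
qed

lemma meas_prob_val:
  fixes m :: nat and f :: "(nat \<Rightarrow> nat \<Rightarrow> int) \<Rightarrow> (nat \<Rightarrow> nat \<Rightarrow> int)"
  defines "F \<equiv> Gfull p r \<alpha> m" and "fi \<equiv> f_node f i"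
  assumes fmaps: "\<forall>x\<in>G. fi x \<in> F"
    and fhide: "\<forall>x\<in>G. \<forall>x'\<in>G. fi x' = fi x \<longleftrightarrow> add x' (neg x) \<in> Kp"
    and gd: "\<forall>b\<in>F. \<forall>d\<in>F. g_diff p \<alpha> b d = (\<lambda>_ _. 0) \<longleftrightarrow> b = d"
    and finF: "finite F"
    and y: "y \<in> G"
  shows "meas_prob p r \<alpha> m f i y = (if \<forall>k\<in>Kp. orth y k then real (card Kp) / real (card G) else 0)"
proof -
  define v0 where "v0 = qft_I p r \<alpha> i init_state"
  define u where "u = U_f p r \<alpha> m i fi v0"
  have v0: "v0 (x, b) = (if b = (\<lambda>_ _. 0) then of_real cc else 0)" for x b
  proof -
    have "v0 (x, b) = (\<Sum>x'\<in>G. qftGi_entry p r \<alpha> i x' x * (if x' = zero \<and> b = (\<lambda>_ _. 0) then 1 else 0))"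
      unfolding v0_def qft_I_def init_state_def by simp
    also have "\<dots> = (\<Sum>x'\<in>G. if x' = zero then (if b = (\<lambda>_ _. 0) then qftGi_entry p r \<alpha> i x' x else 0) else 0)"
      by (rule sum.cong) auto
    also have "\<dots> = (if b = (\<lambda>_ _. 0) then qftGi_entry p r \<alpha> i zero x else 0)"
      using zero_in finite_G by (simp add: sum.delta)
    also have "qftGi_entry p r \<alpha> i zero x = of_real cc" unfolding qftGi_eq using chi_zero chi_sym by simp
    finally show ?thesis .
  qed
  have uval: "u (x, b) = (if x \<in> G \<and> b \<in> F \<and> b = fi x then of_real cc else 0)" for x b
  proof -
    have "u (x, b) = (if x \<in> G \<and> b \<in> F then v0 (x, g_diff p \<alpha> b (fi x)) else 0)"
      unfolding u_def U_f_def F_def by simp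
    then show ?thesis using v0 gd fmaps by auto
  qed
  define T where "T b = (\<Sum>x\<in>G. if fi x = b then cnj (chi y x) else 0)" for b
  have out: "out_state p r \<alpha> m f i (y, b) = of_real (cc ^ 2) * T b" if b: "b \<in> F" for b
  proof -
    have "out_state p r \<alpha> m f i (y, b) = (\<Sum>x\<in>G. cnj (qftGi_entry p r \<alpha> i y x) * u (x, b))"
      unfolding out_state_def qft_dag_I_def u_def v0_def fi_def by simp
    also have "\<dots> = (\<Sum>x\<in>G. of_real (cc ^ 2) * (if fi x = b then cnj (chi y x) else 0))"
      by (rule sum.cong[OF refl]) (use b in \<open>auto simp: uval qftGi_eq power2_eq_square\<close>)
    also have "\<dots> = of_real (cc ^ 2) * T b" unfolding T_def sum_distrib_left ..
    finally show ?thesis .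
  qed
  have fG: "finite G" by (rule finite_G)
  have inner: "(\<Sum>x'\<in>G. if fi x' = fi x then cnj (chi y x) * chi y x' else 0) = (\<Sum>k\<in>Kp. chi y k)"
    if x: "x \<in> G" for x
  proof -
    have seteq: "{x' \<in> G. fi x' = fi x} = add x ` Kp"
    proof
      show "{x' \<in> G. fi x' = fi x} \<subseteq> add x ` Kp"
      proof
        fix x' assume x': "x' \<in> {x' \<in> G. fi x' = fi x}"
        then have k: "add x' (neg x) \<in> Kp" using fhide x by auto
        have x'G: "x' \<in> G" using x' by simp
        have "add x (add x' (neg x)) = x'"
          by (simp only: add_comm[of x' "neg x"] add_neg_cancel[OF x'G])
        then show "x' \<in> add x ` Kp" using k by (intro image_eqI[where x = "add x' (neg x)"]) simp_all
      qed
      show "add x ` Kp \<subseteq> {x' \<in> G. fi x' = fi x}"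
      proof
        fix x' assume "x' \<in> add x ` Kp"
        then obtain k where k: "k \<in> Kp" "x' = add x k" by blast
        have kG: "k \<in> G" using k KpG by auto
        have x'G: "x' \<in> G" using k kG x add_in by simp
        have "add x' (neg x) = k" unfolding k(2)
          by (simp only: add_comm[of x k] add_assoc add_neg add_zero[OF kG])
        then show "x' \<in> {x' \<in> G. fi x' = fi x}" using fhide x x'G k by auto
      qed
    qed
    have inj: "inj_on (add x) Kp" using add_cancel KpG by (meson inj_onI subsetD)
    have "(\<Sum>x'\<in>G. if fi x' = fi x then cnj (chi y x) * chi y x' else 0)
        = (\<Sum>x'\<in>{x' \<in> G. fi x' = fi x}. cnj (chi y x) * chi y x')"
      by (simp add: sum.inter_filter[OF fG])
    also have "\<dots> = (\<Sum>k\<in>Kp. cnj (chi y x) * chi y (add x k))"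
      unfolding seteq by (rule sum.reindex[OF inj, unfolded comp_def])
    also have "\<dots> = (\<Sum>k\<in>Kp. chi y k)"
      by (rule sum.cong[OF refl]) (simp add: chi_add chi_cnj_mult mult.assoc[symmetric])
    finally show ?thesis .
  qed
  have "complex_of_real (meas_prob p r \<alpha> m f i y) = (\<Sum>b\<in>F. complex_of_real ((cmod (out_state p r \<alpha> m f i (y, b)))\<^sup>2))"
    unfolding meas_prob_def F_def of_real_sum ..
  also have "\<dots> = (\<Sum>b\<in>F. of_real (cc^2 * cc^2) * (T b * cnj (T b)))"
  proof (rule sum.cong[OF refl])
    fix b assume b: "b \<in> F"
    have "complex_of_real ((cmod (out_state p r \<alpha> m f i (y, b)))\<^sup>2)
        = out_state p r \<alpha> m f i (y, b) * cnj (out_state p r \<alpha> m f i (y, b))" by (rule complex_norm_square)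
    also have "\<dots> = of_real (cc^2 * cc^2) * (T b * cnj (T b))" unfolding out[OF b] by (simp add: mult_ac)
    finally show "complex_of_real ((cmod (out_state p r \<alpha> m f i (y, b)))\<^sup>2) = of_real (cc^2 * cc^2) * (T b * cnj (T b))" .
  qed
  finally have e0: "complex_of_real (meas_prob p r \<alpha> m f i y) = (\<Sum>b\<in>F. of_real (cc^2 * cc^2) * (T b * cnj (T b)))" .
  have "(\<Sum>b\<in>F. T b * cnj (T b)) = (\<Sum>b\<in>F. \<Sum>x\<in>G. \<Sum>x'\<in>G.
        (if fi x = b then cnj (chi y x) else 0) * (if fi x' = b then chi y x' else 0))"
    unfolding T_def cnj_sum sum_product by (intro sum.cong refl) auto
  also have "\<dots> = (\<Sum>x\<in>G. \<Sum>x'\<in>G. \<Sum>b\<in>F.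
        (if fi x = b then cnj (chi y x) else 0) * (if fi x' = b then chi y x' else 0))"
    by (subst sum.swap) (rule sum.cong[OF refl], rule sum.swap)
  also have "\<dots> = (\<Sum>x\<in>G. \<Sum>x'\<in>G. if fi x' = fi x then cnj (chi y x) * chi y x' else 0)"
  proof (intro sum.cong[OF refl])
    fix x x' assume x: "x \<in> G" and "x' \<in> G"
    have "(\<Sum>b\<in>F. (if fi x = b then cnj (chi y x) else 0) * (if fi x' = b then chi y x' else 0))
        = (\<Sum>b\<in>F. if b = fi x then (if fi x' = fi x then cnj (chi y x) * chi y x' else 0) else 0)"
      by (rule sum.cong[OF refl]) auto
    also have "\<dots> = (if fi x' = fi x then cnj (chi y x) * chi y x' else 0)"
      using fmaps x finF by (simp add: sum.delta')
    finally show "(\<Sum>b\<in>F. (if fi x = b then cnj (chi y x) else 0) * (if fi x' = b then chi y x' else 0))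
        = (if fi x' = fi x then cnj (chi y x) * chi y x' else 0)" .
  qed
  also have "\<dots> = (\<Sum>x\<in>G. \<Sum>k\<in>Kp. chi y k)" by (rule sum.cong[OF refl]) (rule inner)
  also have "\<dots> = of_nat (card G) * (if \<forall>k\<in>Kp. orth y k then of_nat (card Kp) else 0)"
    using char_sum[OF Kp, of y] by simp
  finally have sumT: "(\<Sum>b\<in>F. T b * cnj (T b)) = of_nat (card G) * (if \<forall>k\<in>Kp. orth y k then of_nat (card Kp) else 0)" .
  have e: "complex_of_real (meas_prob p r \<alpha> m f i y)
     = of_real (cc^2 * cc^2) * (of_nat (card G) * (if \<forall>k\<in>Kp. orth y k then of_nat (card Kp) else 0))"
    unfolding e0 sum_distrib_left[symmetric] sumT ..
  have G0: "real (card G) \<noteq> 0" using card_G_pos by simp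
  have "meas_prob p r \<alpha> m f i y = cc^2 * cc^2 * (real (card G) * (if \<forall>k\<in>Kp. orth y k then real (card Kp) else 0))"
  proof -
    have "complex_of_real (cc^2 * cc^2 * (real (card G) * (if \<forall>k\<in>Kp. orth y k then real (card Kp) else 0)))
       = of_real (cc^2 * cc^2) * (of_nat (card G) * (if \<forall>k\<in>Kp. orth y k then of_nat (card Kp) else 0))"
      by simp
    then show ?thesis using e of_real_eq_iff by metis
  qed
  then show ?thesis unfolding cc_sq using G0 by (cases "\<forall>k\<in>Kp. orth y k") (auto simp: field_simps)
qed


lemma A_set_eq: "A_set p r \<alpha> i ms = ann (set ms)"
  unfolding A_set_def ann_def ip_eq ..

lemma H_sub: "H \<subseteq> G" unfolding ann_def by auto
lemma H_pos: "card H > 0" using dualK card_G_pos by (metis gr0I mult_0_right)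

lemma prod_list_meas:
  assumes meas: "\<forall>y\<in>G. g y = (if y \<in> H then q else 0)"
  shows "set ms \<subseteq> G \<Longrightarrow> prod_list (map g ms) = (if set ms \<subseteq> H then q ^ length ms else (0::real))"
proof (induction ms)
  case Nil then show ?case by simp
next
  case (Cons a ms) then show ?case using meas by auto
qed

lemma success_eq:
  fixes m :: nat and f K
  assumes meas: "\<forall>y\<in>G. meas_prob p r \<alpha> m f i y = (if y \<in> H then real (card Kp) / real (card G) else 0)"
    and Kp_eq: "K_node p r \<alpha> K i = Kp"
  shows "success_prob p r \<alpha> m f K i h
     = 1 - real (card {ms. length ms = h \<and> set ms \<subseteq> H \<and> ann (set ms) \<noteq> Kp}) / real (card H) ^ h"
proof -
  define q where "q = real (card Kp) / real (card G)"
  define SL where "SL = {ms. length ms = h \<and> set ms \<subseteq> G \<and> A_set p r \<alpha> i ms = K_node p r \<alpha> K i}"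
  define Good where "Good = {ms. length ms = h \<and> set ms \<subseteq> H \<and> ann (set ms) = Kp}"
  define Bad where "Bad = {ms. length ms = h \<and> set ms \<subseteq> H \<and> ann (set ms) \<noteq> Kp}"
  define LH where "LH = {ms. set ms \<subseteq> H \<and> length ms = h}"
  have finSL: "finite SL"
    by (rule finite_subset[OF _ finite_lists_length_eq[OF finite_G, of h]]) (auto simp: SL_def)
  have "success_prob p r \<alpha> m f K i h = (\<Sum>ms\<in>SL. prod_list (map (meas_prob p r \<alpha> m f i) ms))"
    unfolding success_prob_def SL_def ..
  also have "\<dots> = (\<Sum>ms\<in>SL. if set ms \<subseteq> H then q ^ h else 0)"
    by (rule sum.cong[OF refl]) (use prod_list_meas[OF meas[folded q_def]] in \<open>auto simp: SL_def\<close>)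
  also have "\<dots> = (\<Sum>ms\<in>{ms \<in> SL. set ms \<subseteq> H}. q ^ h)"
    by (rule sum.inter_filter[OF finSL, symmetric])
  also have "{ms \<in> SL. set ms \<subseteq> H} = Good"
    unfolding SL_def Good_def A_set_eq Kp_eq using H_sub by auto
  finally have s1: "success_prob p r \<alpha> m f K i h = real (card Good) * q ^ h" by simp
  have finLH: "finite LH" unfolding LH_def using finite_lists_length_eq[OF fin_H] .
  have "LH = Good \<union> Bad" "Good \<inter> Bad = {}" unfolding LH_def Good_def Bad_def by auto
  then have "card LH = card Good + card Bad" using finLH by (metis card_Un_disjoint finite_Un)
  moreover have "card LH = card H ^ h" unfolding LH_def using card_lists_length_eq[OF fin_H] .
  ultimately have "card H ^ h = card Good + card Bad" by simp
  then have "real (card H ^ h) = real (card Good) + real (card Bad)" by (simp only: of_nat_add)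
  then have cg: "real (card Good) = real (card H) ^ h - real (card Bad)" by simp
  have q: "q = 1 / real (card H)" unfolding q_def using dualK[symmetric] card_Kp_pos by (simp add: field_simps)
  have Hp: "real (card H) ^ h > 0" using H_pos by simp
  have "success_prob p r \<alpha> m f K i h = (real (card H) ^ h - real (card Bad)) / real (card H) ^ h"
    unfolding s1 cg q by (simp add: power_one_over divide_inverse power_inverse)
  also have "\<dots> = 1 - real (card Bad) / real (card H) ^ h" using Hp by (simp add: diff_divide_distrib)
  finally show ?thesis unfolding Bad_def .
qed

lemma bad_ratio:
  "real (card {ms. length ms = h \<and> set ms \<subseteq> H \<and> ann (set ms) \<noteq> Kp}) / real (card H) ^ h
     \<le> real (card W) / (real (card Kp) * real P ^ h)"
proof -
  let ?B = "card {ms. length ms = h \<and> set ms \<subseteq> H \<and> ann (set ms) \<noteq> Kp}"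
  have "real (?B * card Kp * P ^ h) \<le> real (card W * card H ^ h)" using bad_count by (simp only: of_nat_le_iff)
  then have b: "real ?B * (real (card Kp) * real P ^ h) \<le> real (card W) * real (card H) ^ h" by (simp add: mult_ac)
  have p1: "real (card H) ^ h > 0" using H_pos by simp
  have p2: "real (card Kp) * real P ^ h > 0" using card_Kp_pos P_gt1 by simp
  show ?thesis using b p1 p2 by (simp add: divide_le_eq le_divide_eq field_simps)
qed


end

lemma pow_bound:
  fixes P d h :: nat and x :: real
  assumes P: "P \<ge> 2" and x: "x > 1" and hb: "real h \<ge> real d + of_int \<lceil>log 2 x\<rceil>"
  shows "real P ^ d / real P ^ h \<le> 1 / x"
proof -
  have lx: "log 2 x > 0" using x by simp
  have c: "of_int \<lceil>log 2 x\<rceil> \<ge> log 2 x" by simp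
  then have hd: "d \<le> h" using hb lx by linarith
  define t where "t = h - d"
  have ht: "h = d + t" unfolding t_def using hd by simp
  have "real t = real h - real d" unfolding t_def using hd by (simp add: of_nat_diff)
  then have tl: "real t \<ge> log 2 x" using hb c by linarith
  have "x = 2 powr (log 2 x)" using x by simp
  also have "\<dots> \<le> 2 powr (real t)" using tl by (intro powr_mono) auto
  also have "\<dots> = 2 ^ t" by (simp add: powr_realpow)
  also have "\<dots> \<le> real P ^ t" using P by (intro power_mono) auto
  finally have xt: "x \<le> real P ^ t" .
  have Pd: "real P ^ d > 0" using P by simp
  have "real P ^ d / real P ^ h = 1 / real P ^ t" unfolding ht power_add using Pd by simp
  also have "\<dots> \<le> 1 / x" using xt x P by (intro divide_left_mono) (auto intro!: mult_pos_pos)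
  finally show ?thesis .
qed

lemma embed_add: "embed i (gi_add p \<alpha> i x y) = g_add p \<alpha> (embed i x) (embed i y)"
  unfolding embed_def gi_add_def g_add_def by (intro ext) auto
lemma embed_neg: "embed i (gi_neg p \<alpha> i x) = g_neg p \<alpha> (embed i x)"
  unfolding embed_def gi_neg_def g_neg_def by (intro ext) auto
lemma embed_zero: "embed i (\<lambda>_. 0) = (\<lambda>_ _. 0)"
  unfolding embed_def by (intro ext) auto

lemma Gfull_in: assumes "x \<in> Gfull p r \<alpha> m" "k < m" "j < r k"
  shows "0 \<le> x k j \<and> x k j < int (p k ^ \<alpha> k j)"
proof -
  have "\<forall>k j. if k < m \<and> j < r k then 0 \<le> x k j \<and> x k j < int (p k ^ \<alpha> k j) else x k j = 0"
    using assms(1) unfolding Gfull_def by simp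
  then have "if k < m \<and> j < r k then 0 \<le> x k j \<and> x k j < int (p k ^ \<alpha> k j) else x k j = 0" by blast
  then show ?thesis using assms by simp
qed

lemma Gfull_out: assumes "x \<in> Gfull p r \<alpha> m" "\<not> (k < m \<and> j < r k)"
  shows "x k j = 0"
proof -
  have "\<forall>k j. if k < m \<and> j < r k then 0 \<le> x k j \<and> x k j < int (p k ^ \<alpha> k j) else x k j = 0"
    using assms(1) unfolding Gfull_def by simp
  then have "if k < m \<and> j < r k then 0 \<le> x k j \<and> x k j < int (p k ^ \<alpha> k j) else x k j = 0" by blast
  then show ?thesis using assms by simp
qed

lemma gdiff_zero:
  assumes b: "b \<in> Gfull p r \<alpha> m" and d: "d \<in> Gfull p r \<alpha> m"
  shows "g_diff p \<alpha> b d = (\<lambda>_ _. 0) \<longleftrightarrow> b = d"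
proof
  assume "b = d"
  then show "g_diff p \<alpha> b d = (\<lambda>_ _. 0)"
    unfolding g_diff_def g_add_def g_neg_def by (intro ext) (simp add: mod_add_right_eq)
next
  assume e: "g_diff p \<alpha> b d = (\<lambda>_ _. 0)"
  show "b = d"
  proof (intro ext)
    fix k j
    have "(b k j + (- d k j) mod int (p k ^ \<alpha> k j)) mod int (p k ^ \<alpha> k j) = 0"
      using fun_cong[OF fun_cong[OF e, of k], of j] unfolding g_diff_def g_add_def g_neg_def by simp
    then have m0: "(b k j - d k j) mod int (p k ^ \<alpha> k j) = 0" by (simp add: mod_add_right_eq)
    show "b k j = d k j"
    proof (cases "k < m \<and> j < r k")
      case True
      have bb: "0 \<le> b k j \<and> b k j < int (p k ^ \<alpha> k j)" using Gfull_in[OF b] True by blast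
      have dd: "0 \<le> d k j \<and> d k j < int (p k ^ \<alpha> k j)" using Gfull_in[OF d] True by blast
      have "b k j mod int (p k ^ \<alpha> k j) = d k j mod int (p k ^ \<alpha> k j)"
        using m0 by (simp add: mod_eq_dvd_iff mod_eq_0_iff_dvd)
      then show ?thesis using bb dd by (simp add: mod_pos_pos_trivial)
    next
      case False
      then show ?thesis using Gfull_out[OF b] Gfull_out[OF d] by simp
    qed
  qed
qed

lemma finite_Gfull: "finite (Gfull p r \<alpha> m)"
proof -
  define I where "I = (SIGMA k:{..<m}. {..<r k})"
  define T where "T = PiE I (\<lambda>kj. {0..<int (p (fst kj) ^ \<alpha> (fst kj) (snd kj))})"
  define g where "g v = (\<lambda>k j. if (k, j) \<in> I then v (k, j) else (0::int))" for v
  have fI: "finite I" unfolding I_def by auto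
  have fT: "finite T" unfolding T_def using fI by (intro finite_PiE) auto
  have "Gfull p r \<alpha> m \<subseteq> g ` T"
  proof
    fix x assume x: "x \<in> Gfull p r \<alpha> m"
    define v where "v = restrict (\<lambda>kj. x (fst kj) (snd kj)) I"
    have vT: "v \<in> T" unfolding v_def T_def restrict_PiE_iff I_def
    proof
      fix kj assume "kj \<in> (SIGMA k:{..<m}. {..<r k})"
      then have "fst kj < m \<and> snd kj < r (fst kj)" by auto
      then show "x (fst kj) (snd kj) \<in> {0..<int (p (fst kj) ^ \<alpha> (fst kj) (snd kj))}"
        using Gfull_in[OF x] by simp
    qed
    have "g v = x"
    proof (intro ext)
      fix k j show "g v k j = x k j"
      proof (cases "(k, j) \<in> I")
        case True then show ?thesis unfolding g_def v_def by simp
      next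
        case False
        then have "\<not> (k < m \<and> j < r k)" unfolding I_def by auto
        then have "x k j = 0" using Gfull_out[OF x] by simp
        then show ?thesis unfolding g_def using False by simp
      qed
    qed
    then show "x \<in> g ` T" using vT by (intro image_eqI[where x = v]) simp_all
  qed
  then show ?thesis using fT finite_surj by blast
qed

theorem theorem8:
  fixes m :: nat and p r :: "nat \<Rightarrow> nat" and \<alpha> :: "nat \<Rightarrow> nat \<Rightarrow> nat"
    and K :: "(nat \<Rightarrow> nat \<Rightarrow> int) set" and f :: "(nat \<Rightarrow> nat \<Rightarrow> int) \<Rightarrow> (nat \<Rightarrow> nat \<Rightarrow> int)"
    and i h :: nat and \<epsilon> :: real
  assumes primes: "\<forall>k<m. prime (p k)"
    and distinct_primes: "inj_on p {..<m}"
    and alpha_pos: "\<forall>k<m. \<forall>j<r k. 1 \<le> \<alpha> k j"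
    and K_subgroup: "is_subgrp (Gfull p r \<alpha> m) (g_add p \<alpha>) (g_neg p \<alpha>) (\<lambda>_ _. 0) K"
    and f_maps: "\<forall>x\<in>Gfull p r \<alpha> m. f x \<in> Gfull p r \<alpha> m"
    and f_hides: "\<forall>x\<in>Gfull p r \<alpha> m. \<forall>y\<in>Gfull p r \<alpha> m. f x = f y \<longleftrightarrow> g_diff p \<alpha> x y \<in> K"
    and i_node: "i < m"
    and eps: "0 < \<epsilon>" "\<epsilon> < 1"
    and h_bound: "real h \<ge> real (Gi_rank p r \<alpha> i (Gi p r \<alpha> i)) + of_int \<lceil>log 2 (2 * real m / \<epsilon>)\<rceil>
      \<or> real h \<ge> real (plen (p i) (Gi p r \<alpha> i)) - real (plen (p i) (K_node p r \<alpha> K i))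
                  + of_int \<lceil>log 2 (real m / \<epsilon>)\<rceil>"
  shows "success_prob p r \<alpha> m f K i h \<ge> 1 - \<epsilon> / real m"
proof -
  have m1: "real m \<ge> 1" using i_node by simp
  interpret qg p r \<alpha> i using primes alpha_pos i_node by unfold_locales auto
  define Kp where "Kp = K_node p r \<alpha> K i"
  have K0: "(\<lambda>_ _. 0) \<in> K" and Kadd: "\<And>x y. x \<in> K \<Longrightarrow> y \<in> K \<Longrightarrow> g_add p \<alpha> x y \<in> K"
    and Kneg: "\<And>x. x \<in> K \<Longrightarrow> g_neg p \<alpha> x \<in> K"
    using K_subgroup unfolding is_subgrp_def by auto
  have embG: "embed i x \<in> Gfull p r \<alpha> m" if x: "x \<in> G" for x
  proof -
    have "\<forall>k j. if k < m \<and> j < r k then 0 \<le> embed i x k j \<and> embed i x k j < int (p k ^ \<alpha> k j) else embed i x k j = 0"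
    proof (intro allI)
      fix k j
      show "if k < m \<and> j < r k then 0 \<le> embed i x k j \<and> embed i x k j < int (p k ^ \<alpha> k j) else embed i x k j = 0"
      proof (cases "k = i")
        case True then show ?thesis using x i_node unfolding memG embed_def by auto
      next
        case False
        have "k < m \<Longrightarrow> p k > 0" using primes prime_gt_0_nat by auto
        then show ?thesis using False unfolding embed_def by auto
      qed
    qed
    then show ?thesis unfolding Gfull_def by simp
  qed
  have sK: "subgrp Kp"
    unfolding is_subgrp_def Kp_def K_node_def
    using zero_in embed_zero K0 add_in embed_add Kadd neg_in embed_neg Kneg by auto
  interpret qgK p r \<alpha> i Kp by unfold_locales (rule sK)
  have fhide: "\<forall>x\<in>G. \<forall>x'\<in>G. f_node f i x' = f_node f i x \<longleftrightarrow> add x' (neg x) \<in> Kp"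
  proof (intro ballI)
    fix x x' assume x: "x \<in> G" and x': "x' \<in> G"
    have "f_node f i x' = f_node f i x \<longleftrightarrow> g_diff p \<alpha> (embed i x') (embed i x) \<in> K"
      unfolding f_node_def using f_hides embG[OF x] embG[OF x'] by blast
    also have "g_diff p \<alpha> (embed i x') (embed i x) = embed i (add x' (neg x))"
      unfolding g_diff_def embed_add embed_neg ..
    also have "embed i (add x' (neg x)) \<in> K \<longleftrightarrow> add x' (neg x) \<in> Kp"
      unfolding Kp_def K_node_def using add_in[OF x' neg_in[OF x]] by simp
    finally show "f_node f i x' = f_node f i x \<longleftrightarrow> add x' (neg x) \<in> Kp" .
  qed
  have meas: "\<forall>y\<in>G. meas_prob p r \<alpha> m f i y = (if y \<in> H then real (card Kp) / real (card G) else 0)"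
  proof
    fix y assume y: "y \<in> G"
    have "meas_prob p r \<alpha> m f i y = (if \<forall>k\<in>Kp. orth y k then real (card Kp) / real (card G) else 0)"
    proof (rule meas_prob_val)
      show "\<forall>x\<in>G. f_node f i x \<in> Gfull p r \<alpha> m" using f_maps embG unfolding f_node_def by blast
      show "\<forall>x\<in>G. \<forall>x'\<in>G. f_node f i x' = f_node f i x \<longleftrightarrow> add x' (neg x) \<in> Kp" by (rule fhide)
      show "\<forall>b\<in>Gfull p r \<alpha> m. \<forall>d\<in>Gfull p r \<alpha> m. g_diff p \<alpha> b d = (\<lambda>_ _. 0) \<longleftrightarrow> b = d"
        using gdiff_zero by blast
      show "finite (Gfull p r \<alpha> m)" by (rule finite_Gfull)
      show "y \<in> G" by (rule y)
    qed
    moreover have "(\<forall>k\<in>Kp. orth y k) \<longleftrightarrow> y \<in> H" unfolding ann_def using y orth_sym by auto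
    ultimately show "meas_prob p r \<alpha> m f i y = (if y \<in> H then real (card Kp) / real (card G) else 0)" by simp
  qed
  have succ: "success_prob p r \<alpha> m f K i h
     = 1 - real (card {ms. length ms = h \<and> set ms \<subseteq> H \<and> ann (set ms) \<noteq> Kp}) / real (card H) ^ h"
    using success_eq[OF meas Kp_def[symmetric]] .
  have P2: "P \<ge> 2" using P_gt1 by simp
  have Kp0: "real (card Kp) > 0" using card_Kp_pos by simp
  have plen_eq: "plen P X = n" if "card X = P ^ n" for X :: "(nat \<Rightarrow> int) set" and n
    unfolding plen_def using that P_gt1 by (intro the_equality) auto
  have key: "real (card W) / (real (card Kp) * real P ^ h) \<le> \<epsilon> / real m"
    using h_bound
  proof
    assume hb: "real h \<ge> real (Gi_rank p r \<alpha> i G) + of_int \<lceil>log 2 (2 * real m / \<epsilon>)\<rceil>"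
    have "\<exists>n S. finite S \<and> card S = n \<and> S \<subseteq> G \<and> Gi_span p r \<alpha> i S = G"
    proof (intro exI conjI)
      show "finite G" by (rule finite_G)
      show "Gi_span p r \<alpha> i G = G"
      proof
        show "Gi_span p r \<alpha> i G \<subseteq> G" unfolding Gi_span_def using subgrp_G by blast
        show "G \<subseteq> Gi_span p r \<alpha> i G" unfolding Gi_span_def by blast
      qed
    qed auto
    then have "\<exists>S. finite S \<and> card S = (LEAST n. \<exists>S. finite S \<and> card S = n \<and> S \<subseteq> G \<and> Gi_span p r \<alpha> i S = G) \<and> S \<subseteq> G \<and> Gi_span p r \<alpha> i S = G"
      by (rule LeastI_ex)
    then obtain Sg where Sg: "finite Sg" "card Sg = Gi_rank p r \<alpha> i G" "Sg \<subseteq> G" "Gi_span p r \<alpha> i Sg = G"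
      unfolding Gi_rank_def by blast
    define d where "d = Gi_rank p r \<alpha> i G"
    have "card W \<le> P ^ d * card Kp"
    proof -
      have "card Gp * card Kp \<le> P ^ d * card Kp" using Gp_bound[OF Sg(1,3,4)] Sg(2) unfolding d_def
        by (intro mult_le_mono1) simp
      then show ?thesis using W_le_Gp by linarith
    qed
    then have "real (card W) \<le> real (P ^ d * card Kp)" by (simp only: of_nat_le_iff)
    then have "real (card W) \<le> real P ^ d * real (card Kp)" by simp
    then have "real (card W) / (real (card Kp) * real P ^ h) \<le> real P ^ d * real (card Kp) / (real (card Kp) * real P ^ h)"
      using Kp0 P_gt1 by (intro divide_right_mono) auto
    also have "\<dots> = real P ^ d / real P ^ h" using Kp0 by simp
    also have "\<dots> \<le> 1 / (2 * real m / \<epsilon>)"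
    proof (rule pow_bound[OF P2])
      show "1 < 2 * real m / \<epsilon>" using eps m1 by (simp add: field_simps)
      show "real d + of_int \<lceil>log 2 (2 * real m / \<epsilon>)\<rceil> \<le> real h" using hb unfolding d_def .
    qed
    also have "\<dots> \<le> \<epsilon> / real m" using eps m1 by (simp add: field_simps)
    finally show ?thesis .
  next
    assume hb: "real h \<ge> real (plen (p i) G) - real (plen (p i) (K_node p r \<alpha> K i)) + of_int \<lceil>log 2 (real m / \<epsilon>)\<rceil>"
    define nG where "nG = (\<Sum>j<R. \<alpha> i j)"
    obtain nK where nK: "card Kp = P ^ nK" using card_subgrp_pow[OF Kp] by blast
    have pG: "plen P G = nG" by (rule plen_eq) (simp add: card_G nG_def)
    have pK: "plen P (K_node p r \<alpha> K i) = nK" by (rule plen_eq) (use nK in \<open>simp add: Kp_def\<close>)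
    have cKG: "card Kp \<le> card G" by (rule card_mono[OF finite_G KpG])
    have "P ^ nK \<le> P ^ nG" using cKG by (simp only: nK card_G nG_def)
    then have le: "nK \<le> nG" by (rule power_le_imp_le_exp[OF P_gt1])
    have "card W \<le> P ^ nG" using W_le_G card_G unfolding nG_def by simp
    then have "real (card W) \<le> real (P ^ nG)" by (simp only: of_nat_le_iff)
    then have "real (card W) \<le> real P ^ nG" by simp
    then have "real (card W) / (real (card Kp) * real P ^ h) \<le> real P ^ nG / (real (card Kp) * real P ^ h)"
      using Kp0 P_gt1 by (intro divide_right_mono) auto
    also have "\<dots> = real P ^ (nG - nK) / real P ^ h"
    proof -
      have "real P ^ nG = real P ^ (nG - nK) * real P ^ nK" using le by (simp add: power_add[symmetric])
      then show ?thesis using nK P_gt1 by simp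
    qed
    also have "\<dots> \<le> 1 / (real m / \<epsilon>)"
    proof (rule pow_bound[OF P2])
      show "1 < real m / \<epsilon>" using eps m1 by (simp add: field_simps)
      show "real (nG - nK) + of_int \<lceil>log 2 (real m / \<epsilon>)\<rceil> \<le> real h" using hb pG pK le by (simp add: of_nat_diff)
    qed
    also have "\<dots> = \<epsilon> / real m" by simp
    finally show ?thesis .
  qed
  show ?thesis unfolding succ using bad_ratio[of h] key by linarith
qed

end
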